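(* A monoid $S$ is weakly right coherent if and only if $S^0$ is weakly right coherent.
   Context: For a semigroup $S$, $S^0$ denotes $S$ if $S$ has a zero, and otherwise $S$ with a zero adjoined. A semigroup $T$ is weakly right coherent if $T^1$ is weakly right coherent, where $T^1$ is $T$ if $T$ is a monoid and otherwise $T$ with an identity adjoined; a monoid $M$ is weakly right coherent if every finitely generated right ideal of $M$ is finitely presented as a right $M$-act (equivalently, known: $M$ is right ideal Howson and finitely right equated). *)

theory Defs
  imports "HOL-Algebra.Group"
begin

definition right_ideal :: "'a monoid \<Rightarrow> 'a set \<Rightarrow> bool" where
  "right_ideal M I \<longleftrightarrow> I \<subseteq> carrier M \<and>
     (\<forall>a\<in>I. \<forall>s\<in>carrier M. a \<otimes>\<^bsub>M\<^esub> s \<in> I)"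

definition fg_right_ideal :: "'a monoid \<Rightarrow> 'a set \<Rightarrow> bool" where
  "fg_right_ideal M I \<longleftrightarrow> right_ideal M I \<and>
     (\<exists>X. finite X \<and> X \<subseteq> carrier M \<and>
          I = {x \<otimes>\<^bsub>M\<^esub> s | x s. x \<in> X \<and> s \<in> carrier M})"

text \<open>The free right M-act on the finite set of generators {0..<n}:
  pairs (i, s) with i < n and s in M, acted on by (i,s)t = (i, st).\<close>

definition free_act :: "'a monoid \<Rightarrow> nat \<Rightarrow> (nat \<times> 'a) set" where
  "free_act M n = {..<n} \<times> carrier M"

definition right_congruence :: "'a monoid \<Rightarrow> nat \<Rightarrow> ((nat \<times> 'a) \<times> (nat \<times> 'a)) set \<Rightarrow> bool" where
  "right_congruence M n \<rho> \<longleftrightarrow> equiv (free_act M n) \<rho> \<and>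
     (\<forall>i s j t u. ((i, s), (j, t)) \<in> \<rho> \<longrightarrow> u \<in> carrier M \<longrightarrow>
        ((i, s \<otimes>\<^bsub>M\<^esub> u), (j, t \<otimes>\<^bsub>M\<^esub> u)) \<in> \<rho>)"

definition generated_right_congruence ::
  "'a monoid \<Rightarrow> nat \<Rightarrow> ((nat \<times> 'a) \<times> (nat \<times> 'a)) set \<Rightarrow> ((nat \<times> 'a) \<times> (nat \<times> 'a)) set" where
  "generated_right_congruence M n H = \<Inter>{\<rho>. right_congruence M n \<rho> \<and> H \<subseteq> \<rho>}"

definition fg_right_congruence :: "'a monoid \<Rightarrow> nat \<Rightarrow> ((nat \<times> 'a) \<times> (nat \<times> 'a)) set \<Rightarrow> bool" where
  "fg_right_congruence M n \<rho> \<longleftrightarrow>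
     (\<exists>H. finite H \<and> H \<subseteq> free_act M n \<times> free_act M n \<and> \<rho> = generated_right_congruence M n H)"

text \<open>A right ideal I (viewed as a right M-act) is finitely presented if there is
  a surjective act morphism F_n \<rightarrow> I, (i,s) \<mapsto> f i \<otimes> s, from a finitely generated
  free act, whose kernel is a finitely generated right congruence (i.e. I \<cong> F_n/\<rho>
  with \<rho> finitely generated).\<close>

definition act_kernel :: "'a monoid \<Rightarrow> nat \<Rightarrow> (nat \<Rightarrow> 'a) \<Rightarrow> ((nat \<times> 'a) \<times> (nat \<times> 'a)) set" where
  "act_kernel M n f = {((i, s), (j, t)). (i, s) \<in> free_act M n \<and> (j, t) \<in> free_act M n \<and>
       f i \<otimes>\<^bsub>M\<^esub> s = f j \<otimes>\<^bsub>M\<^esub> t}"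

definition fp_right_ideal :: "'a monoid \<Rightarrow> 'a set \<Rightarrow> bool" where
  "fp_right_ideal M I \<longleftrightarrow>
     (\<exists>n f. (\<forall>i<n. f i \<in> I) \<and>
            I = {f i \<otimes>\<^bsub>M\<^esub> s | i s. i < n \<and> s \<in> carrier M} \<and>
            fg_right_congruence M n (act_kernel M n f))"

definition weakly_right_coherent :: "'a monoid \<Rightarrow> bool" where
  "weakly_right_coherent M \<longleftrightarrow> (\<forall>I. fg_right_ideal M I \<longrightarrow> fp_right_ideal M I)"

definition has_zero :: "'a monoid \<Rightarrow> bool" where
  "has_zero S \<longleftrightarrow> (\<exists>z\<in>carrier S. \<forall>x\<in>carrier S. z \<otimes>\<^bsub>S\<^esub> x = z \<and> x \<otimes>\<^bsub>S\<^esub> z = z)"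

text \<open>S^0, realised on the type 'a option: an isomorphic copy of S (via Some) if S
  already has a zero, otherwise that copy with a new zero None adjoined.\<close>

definition zero_adjoin :: "'a monoid \<Rightarrow> 'a option monoid" where
  "zero_adjoin S = \<lparr> carrier = (if has_zero S then Some ` carrier S
                                 else insert None (Some ` carrier S)),
      mult = (\<lambda>x y. case (x, y) of (Some a, Some b) \<Rightarrow> Some (a \<otimes>\<^bsub>S\<^esub> b) | _ \<Rightarrow> None),
      one = Some \<one>\<^bsub>S\<^esub> \<rparr>"

end

theory Submission
  imports Defs
begin


lemma gen_least: "right_congruence M n \<rho> \<Longrightarrow> H \<subseteq> \<rho> \<Longrightarrow> generated_right_congruence M n H \<subseteq> \<rho>"
  unfolding generated_right_congruence_def by blast

lemma kernel_eq_gen: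
  assumes "right_congruence M n K" "H \<subseteq> K"
    "\<And>\<rho>. right_congruence M n \<rho> \<Longrightarrow> H \<subseteq> \<rho> \<Longrightarrow> K \<subseteq> \<rho>"
  shows "K = generated_right_congruence M n H"
  unfolding generated_right_congruence_def using assms by blast

lemma fp_empty: "fp_right_ideal M {}"
proof -
  have k: "act_kernel M 0 f = {}" for f by (auto simp: act_kernel_def free_act_def)
  have rc: "right_congruence M 0 {}"
    by (simp add: right_congruence_def free_act_def equiv_def refl_on_def sym_def trans_def)
  have "generated_right_congruence M 0 {} = {}" using gen_least[OF rc] by blast
  hence "fg_right_congruence M 0 (act_kernel M 0 (\<lambda>_. undefined))"
    unfolding fg_right_congruence_def k by (intro exI[of _ "{}"]) auto
  thus ?thesis unfolding fp_right_ideal_def by (intro exI[of _ 0] exI[of _ "\<lambda>_. undefined"]) auto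
qed

lemma kernel_rc:
  assumes M: "monoid M" and f: "\<And>i. i<n \<Longrightarrow> f i \<in> carrier M"
  shows "right_congruence M n (act_kernel M n f)"
  unfolding right_congruence_def equiv_def refl_on_def sym_def trans_def
proof (intro conjI allI impI ballI)
  show "act_kernel M n f \<subseteq> free_act M n \<times> free_act M n"
    by (auto simp: act_kernel_def)
next
  fix x assume "x \<in> free_act M n" thus "(x, x) \<in> act_kernel M n f"
    by (cases x) (auto simp: act_kernel_def)
next
  fix x y assume "(x, y) \<in> act_kernel M n f" thus "(y, x) \<in> act_kernel M n f"
    by (cases x; cases y) (auto simp: act_kernel_def)
next
  fix x y z assume "(x, y) \<in> act_kernel M n f" "(y, z) \<in> act_kernel M n f"
  thus "(x, z) \<in> act_kernel M n f"
    by (cases x; cases y; cases z) (auto simp: act_kernel_def)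
next
  fix i s j t u assume "((i, s), j, t) \<in> act_kernel M n f" "u \<in> carrier M"
  thus "((i, s \<otimes>\<^bsub>M\<^esub> u), j, t \<otimes>\<^bsub>M\<^esub> u) \<in> act_kernel M n f"
    using f monoid.m_assoc[OF M] monoid.m_closed[OF M]
    by (auto simp: act_kernel_def free_act_def) (metis monoid.m_assoc[OF M] f)
qed

context fixes S :: "'a monoid" begin

lemma Z_carrier: "carrier (zero_adjoin S) = (if has_zero S then Some ` carrier S else insert None (Some ` carrier S))"
  by (simp add: zero_adjoin_def)
lemma Z_SS[simp]: "Some a \<otimes>\<^bsub>zero_adjoin S\<^esub> Some b = Some (a \<otimes>\<^bsub>S\<^esub> b)"
  by (simp add: zero_adjoin_def)
lemma Z_N1[simp]: "None \<otimes>\<^bsub>zero_adjoin S\<^esub> x = None"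
  by (simp add: zero_adjoin_def)
lemma Z_N2[simp]: "x \<otimes>\<^bsub>zero_adjoin S\<^esub> None = None"
  by (cases x) (simp_all add: zero_adjoin_def)
lemma Z_one[simp]: "\<one>\<^bsub>zero_adjoin S\<^esub> = Some \<one>\<^bsub>S\<^esub>"
  by (simp add: zero_adjoin_def)
lemma Z_Some_mem[simp]: "Some a \<in> carrier (zero_adjoin S) \<longleftrightarrow> a \<in> carrier S"
  by (auto simp: zero_adjoin_def)
lemma Z_None_mem: "None \<in> carrier (zero_adjoin S) \<longleftrightarrow> \<not> has_zero S"
  by (auto simp: zero_adjoin_def)
lemma Z_cases: "x \<in> carrier (zero_adjoin S) \<Longrightarrow> x = None \<or> (\<exists>a\<in>carrier S. x = Some a)"
  by (auto simp: zero_adjoin_def split: if_splits)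
lemma Z_prod_Some: "Some c = x \<otimes>\<^bsub>zero_adjoin S\<^esub> y \<Longrightarrow> \<exists>a b. x = Some a \<and> y = Some b \<and> c = a \<otimes>\<^bsub>S\<^esub> b"
  by (cases x; cases y) auto
lemma Z_prod_None: "x \<otimes>\<^bsub>zero_adjoin S\<^esub> y = None \<longleftrightarrow> x = None \<or> y = None"
  by (cases x; cases y) auto

lemma Z_monoid: assumes "monoid S" shows "monoid (zero_adjoin S)"
proof (rule monoidI)
  fix x y assume "x \<in> carrier (zero_adjoin S)" "y \<in> carrier (zero_adjoin S)"
  thus "x \<otimes>\<^bsub>zero_adjoin S\<^esub> y \<in> carrier (zero_adjoin S)"
    using Z_cases[of x] Z_cases[of y] monoid.m_closed[OF assms] by auto
next
  show "\<one>\<^bsub>zero_adjoin S\<^esub> \<in> carrier (zero_adjoin S)" using monoid.one_closed[OF assms] by simp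
next
  fix x y z assume "x \<in> carrier (zero_adjoin S)" "y \<in> carrier (zero_adjoin S)" "z \<in> carrier (zero_adjoin S)"
  thus "x \<otimes>\<^bsub>zero_adjoin S\<^esub> y \<otimes>\<^bsub>zero_adjoin S\<^esub> z = x \<otimes>\<^bsub>zero_adjoin S\<^esub> (y \<otimes>\<^bsub>zero_adjoin S\<^esub> z)"
    using Z_cases[of x] Z_cases[of y] Z_cases[of z] monoid.m_assoc[OF assms] by auto
next
  fix x assume "x \<in> carrier (zero_adjoin S)"
  thus "\<one>\<^bsub>zero_adjoin S\<^esub> \<otimes>\<^bsub>zero_adjoin S\<^esub> x = x" "x \<otimes>\<^bsub>zero_adjoin S\<^esub> \<one>\<^bsub>zero_adjoin S\<^esub> = x"
    using Z_cases[of x] monoid.l_one[OF assms] monoid.r_one[OF assms] by auto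
qed

end


lemma rc_refl: "right_congruence M n \<rho> \<Longrightarrow> x \<in> free_act M n \<Longrightarrow> (x,x) \<in> \<rho>"
  by (auto simp: right_congruence_def equiv_def refl_on_def)
lemma rc_sym: "right_congruence M n \<rho> \<Longrightarrow> (x,y) \<in> \<rho> \<Longrightarrow> (y,x) \<in> \<rho>"
  unfolding right_congruence_def equiv_def sym_def by blast
lemma rc_trans: "right_congruence M n \<rho> \<Longrightarrow> (x,y) \<in> \<rho> \<Longrightarrow> (y,z) \<in> \<rho> \<Longrightarrow> (x,z) \<in> \<rho>"
  unfolding right_congruence_def equiv_def trans_def by blast
lemma rc_sub: "right_congruence M n \<rho> \<Longrightarrow> (x,y) \<in> \<rho> \<Longrightarrow> x \<in> free_act M n \<and> y \<in> free_act M n"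
  by (auto simp: right_congruence_def equiv_def)
lemma rc_comp: "right_congruence M n \<rho> \<Longrightarrow> ((i,s),(j,t)) \<in> \<rho> \<Longrightarrow> u \<in> carrier M \<Longrightarrow>
   ((i, s \<otimes>\<^bsub>M\<^esub> u), (j, t \<otimes>\<^bsub>M\<^esub> u)) \<in> \<rho>"
  by (auto simp: right_congruence_def)

lemma dirA_zero:
  assumes M: "monoid S" and N: "None \<in> carrier (zero_adjoin S)"
  shows "fp_right_ideal (zero_adjoin S) {None}"
proof -
  let ?Z = "zero_adjoin S"
  have MZ: "monoid ?Z" using Z_monoid[OF M] .
  have o: "Some \<one>\<^bsub>S\<^esub> \<in> carrier ?Z" using monoid.one_closed[OF M] by simp
  let ?f = "\<lambda>_::nat. (None :: 'a option)"
  let ?H = "{((0::nat, Some \<one>\<^bsub>S\<^esub>), (0::nat, None::'a option))}"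
  have "act_kernel ?Z 1 ?f = generated_right_congruence ?Z 1 ?H"
  proof (rule kernel_eq_gen)
    show "right_congruence ?Z 1 (act_kernel ?Z 1 ?f)" using kernel_rc[OF MZ] N by auto
    show "?H \<subseteq> act_kernel ?Z 1 ?f" using o N by (auto simp: act_kernel_def free_act_def)
  next
    fix \<rho> assume r: "right_congruence ?Z 1 \<rho>" "?H \<subseteq> \<rho>"
    have key: "((0, s), (0, None)) \<in> \<rho>" if "s \<in> carrier ?Z" for s
      using rc_comp[OF r(1), of 0 "Some \<one>\<^bsub>S\<^esub>" 0 None s] r(2) that monoid.l_one[OF MZ, of s] by auto
    show "act_kernel ?Z 1 ?f \<subseteq> \<rho>"
    proof
      fix p assume "p \<in> act_kernel ?Z 1 ?f"
      then obtain s t where p: "p = ((0,s),(0,t))" "s \<in> carrier ?Z" "t \<in> carrier ?Z"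
        by (auto simp: act_kernel_def free_act_def)
      show "p \<in> \<rho>" using p key[of s] key[of t] rc_sym[OF r(1)] rc_trans[OF r(1)] by blast
    qed
  qed
  hence fg: "fg_right_congruence ?Z 1 (act_kernel ?Z 1 ?f)"
    unfolding fg_right_congruence_def using o N by (intro exI[of _ ?H]) (auto simp: free_act_def)
  have eq: "{None} = {?f i \<otimes>\<^bsub>?Z\<^esub> s | i s. i < 1 \<and> s \<in> carrier ?Z}"
    using o by (auto intro!: exI[of _ 0] exI[of _ "Some \<one>\<^bsub>S\<^esub>"])
  show ?thesis unfolding fp_right_ideal_def using fg eq by (intro exI[of _ 1] exI[of _ ?f]) auto
qed

lemma dirA_lift:
  assumes M: "monoid S" and fI: "\<forall>i<n. f i \<in> I" and Ieq: "I = {f i \<otimes>\<^bsub>S\<^esub> s | i s. i < n \<and> s \<in> carrier S}"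
    and Hf: "finite H" and Hs: "H \<subseteq> free_act S n \<times> free_act S n"
    and K: "act_kernel S n f = generated_right_congruence S n H"
    and n: "0 < n" and IS: "I \<subseteq> carrier S"
  shows "fp_right_ideal (zero_adjoin S) (Some ` I \<union> ({None} \<inter> carrier (zero_adjoin S)))"
proof -
  let ?Z = "zero_adjoin S"
  let ?C = "carrier ?Z"
  have MZ: "monoid ?Z" using Z_monoid[OF M] .
  have fS: "f i \<in> carrier S" if "i < n" for i using fI IS that by auto
  let ?g = "\<lambda>i. Some (f i)"
  let ?L = "\<lambda>((i::nat,a),(j::nat,b)). ((i, Some a), (j, Some b))"
  let ?H = "?L ` H \<union> (if None \<in> ?C then (\<lambda>i. ((i, None), (0::nat, None))) ` {..<n} else {})"
  have Hsub: "H \<subseteq> act_kernel S n f" using K kernel_rc[OF M fS] unfolding generated_right_congruence_def by blast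
  have "act_kernel ?Z n ?g = generated_right_congruence ?Z n ?H"
  proof (rule kernel_eq_gen)
    show "right_congruence ?Z n (act_kernel ?Z n ?g)" using kernel_rc[OF MZ] fS by auto
    show "?H \<subseteq> act_kernel ?Z n ?g"
    proof
      fix p assume "p \<in> ?H"
      then consider (a) q where "q \<in> H" "p = ?L q" | (b) i where "None \<in> ?C" "i < n" "p = ((i, None), (0, None))"
        by (auto split: if_splits)
      thus "p \<in> act_kernel ?Z n ?g"
      proof cases
        case a
        then obtain i s j t where q: "q = ((i,s),(j,t))" by (metis prod.exhaust)
        with a Hsub show ?thesis by (auto simp: act_kernel_def free_act_def)
      next
        case b thus ?thesis using n by (auto simp: act_kernel_def free_act_def)
      qed
    qed
  next
    fix \<rho> assume r: "right_congruence ?Z n \<rho>" "?H \<subseteq> \<rho>"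
    define \<sigma> where "\<sigma> = {((i,a),(j,b)). ((i, Some a), (j, Some b)) \<in> \<rho>}"
    have rs: "right_congruence S n \<sigma>"
      unfolding right_congruence_def equiv_def refl_on_def sym_def trans_def
    proof (intro conjI allI impI ballI)
      show "\<sigma> \<subseteq> free_act S n \<times> free_act S n"
        using rc_sub[OF r(1)] unfolding \<sigma>_def free_act_def by fastforce
    next
      fix x assume "x \<in> free_act S n" thus "(x, x) \<in> \<sigma>"
        using rc_refl[OF r(1)] by (cases x) (auto simp: \<sigma>_def free_act_def)
    next
      fix x y assume "(x, y) \<in> \<sigma>" thus "(y, x) \<in> \<sigma>"
        using rc_sym[OF r(1)] by (cases x; cases y) (auto simp: \<sigma>_def)
    next
      fix x y z assume "(x, y) \<in> \<sigma>" "(y, z) \<in> \<sigma>"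
      thus "(x, z) \<in> \<sigma>"
        unfolding \<sigma>_def by (cases x; cases y; cases z) (clarsimp, erule (1) rc_trans[OF r(1)])
    next
      fix i s j t u assume "((i, s), j, t) \<in> \<sigma>" "u \<in> carrier S"
      thus "((i, s \<otimes>\<^bsub>S\<^esub> u), j, t \<otimes>\<^bsub>S\<^esub> u) \<in> \<sigma>"
        using rc_comp[OF r(1), of i "Some s" j "Some t" "Some u"] by (auto simp: \<sigma>_def)
    qed
    have "H \<subseteq> \<sigma>"
    proof
      fix q assume q: "q \<in> H"
      obtain i s j t where qe: "q = ((i,s),(j,t))" by (metis prod.exhaust)
      have "?L q \<in> ?H" using q by (intro UnI1 imageI)
      hence "?L q \<in> \<rho>" using r(2) by (rule subsetD[rotated])
      thus "q \<in> \<sigma>" unfolding \<sigma>_def qe by simp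
    qed
    hence Ks: "act_kernel S n f \<subseteq> \<sigma>" using K gen_least[OF rs] by simp
    have Nrel: "((i, None), (j, None)) \<in> \<rho>" if "None \<in> ?C" "i < n" "j < n" for i j
    proof -
      have "((i, None), (0, None)) \<in> ?H" "((j, None), (0, None)) \<in> ?H" using that by auto
      hence "((i, None), (0, None)) \<in> \<rho>" "((j, None), (0, None)) \<in> \<rho>" using r(2) by auto
      thus ?thesis using rc_sym[OF r(1)] rc_trans[OF r(1)] by blast
    qed
    show "act_kernel ?Z n ?g \<subseteq> \<rho>"
    proof
      fix p assume p: "p \<in> act_kernel ?Z n ?g"
      then obtain i s j t where pe: "p = ((i,s),(j,t))" "i < n" "j < n" "s \<in> ?C" "t \<in> ?C"
        "?g i \<otimes>\<^bsub>?Z\<^esub> s = ?g j \<otimes>\<^bsub>?Z\<^esub> t"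
        by (auto simp: act_kernel_def free_act_def)
      show "p \<in> \<rho>"
      proof (cases s)
        case None
        hence "t = None" using pe(6) by (cases t) auto
        thus ?thesis using None pe Nrel by auto
      next
        case (Some a)
        then obtain b where tb: "t = Some b" using pe(6) by (cases t) auto
        have "((i,a),(j,b)) \<in> act_kernel S n f" using pe Some tb by (auto simp: act_kernel_def free_act_def)
        thus ?thesis using Ks pe Some tb by (auto simp: \<sigma>_def)
      qed
    qed
  qed
  note e1 = this
  have e2: "finite ?H" using Hf by auto
  have e3: "?H \<subseteq> free_act ?Z n \<times> free_act ?Z n"
  proof
    fix p assume "p \<in> ?H"
    then consider (a) q where "q \<in> H" "p = ?L q" | (b) i where "None \<in> ?C" "i < n" "p = ((i, None), (0, None))"
      by (auto split: if_splits)
    thus "p \<in> free_act ?Z n \<times> free_act ?Z n"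
    proof cases
      case a
      then obtain i s j t where q: "q = ((i,s),(j,t))" by (metis prod.exhaust)
      have "(i,s) \<in> free_act S n" "(j,t) \<in> free_act S n" using a(1) Hs q by auto
      thus ?thesis using a(2) q by (simp add: free_act_def)
    next
      case b thus ?thesis using n by (auto simp: free_act_def)
    qed
  qed
  have fg: "fg_right_congruence ?Z n (act_kernel ?Z n ?g)"
    unfolding fg_right_congruence_def by (intro exI[of _ ?H] conjI e1 e2 e3)
  have eq: "Some ` I \<union> ({None} \<inter> ?C) = {Some (f i) \<otimes>\<^bsub>?Z\<^esub> s | i s. i < n \<and> s \<in> ?C}"
  proof (intro Set.set_eqI iffI)
    fix y assume "y \<in> Some ` I \<union> ({None} \<inter> ?C)"
    then consider x where "y = Some x" "x \<in> I" | "y = None" "None \<in> ?C" by blast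
    thus "y \<in> {Some (f i) \<otimes>\<^bsub>?Z\<^esub> s | i s. i < n \<and> s \<in> ?C}"
    proof cases
      case 1
      have "x \<in> {f i \<otimes>\<^bsub>S\<^esub> s | i s. i < n \<and> s \<in> carrier S}" using 1(2) Ieq by simp
      then obtain i s where "i < n" "s \<in> carrier S" "x = f i \<otimes>\<^bsub>S\<^esub> s" by blast
      thus ?thesis using 1 by (intro CollectI exI[of _ i] exI[of _ "Some s"]) auto
    next
      case 2 thus ?thesis using n by (intro CollectI exI[of _ 0] exI[of _ None]) auto
    qed
  next
    fix y assume "y \<in> {Some (f i) \<otimes>\<^bsub>?Z\<^esub> s | i s. i < n \<and> s \<in> ?C}"
    then obtain i s where y: "y = Some (f i) \<otimes>\<^bsub>?Z\<^esub> s" "i < n" "s \<in> ?C" by blast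
    show "y \<in> Some ` I \<union> ({None} \<inter> ?C)"
    proof (cases s)
      case None thus ?thesis using y by auto
    next
      case (Some a)
      hence "a \<in> carrier S" using y by simp
      hence "f i \<otimes>\<^bsub>S\<^esub> a \<in> {f i \<otimes>\<^bsub>S\<^esub> s | i s. i < n \<and> s \<in> carrier S}" using y(2) by blast
      hence "f i \<otimes>\<^bsub>S\<^esub> a \<in> I" using Ieq by simp
      thus ?thesis using y Some by auto
    qed
  qed
  have gI: "\<forall>i<n. ?g i \<in> Some ` I \<union> ({None} \<inter> ?C)" using fI by auto
  show ?thesis unfolding fp_right_ideal_def
    by (rule exI[of _ n], rule exI[of _ ?g]) (use fg eq gI in simp)
qed


lemma dirA:
  assumes M: "monoid S" and W: "weakly_right_coherent S"
  shows "weakly_right_coherent (zero_adjoin S)"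
  unfolding weakly_right_coherent_def
proof (intro allI impI)
  let ?Z = "zero_adjoin S"
  let ?C = "carrier ?Z"
  have MZ: "monoid ?Z" using Z_monoid[OF M] .
  fix I' assume "fg_right_ideal ?Z I'"
  then obtain X' where X': "finite X'" "X' \<subseteq> ?C"
    and I'eq: "I' = {x \<otimes>\<^bsub>?Z\<^esub> s | x s. x \<in> X' \<and> s \<in> ?C}"
    unfolding fg_right_ideal_def by blast
  define X where "X = {x. Some x \<in> X'}"
  have finX: "finite X" unfolding X_def using finite_vimageI[OF X'(1), of Some] by (simp add: vimage_def)
  have XS: "X \<subseteq> carrier S" using X'(2) unfolding X_def by auto
  show "fp_right_ideal ?Z I'"
  proof (cases "X = {}")
    case True
    have X'N: "X' \<subseteq> {None}"
    proof
      fix x assume "x \<in> X'" thus "x \<in> {None}" using True by (cases x) (auto simp: X_def)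
    qed
    show ?thesis
    proof (cases "X' = {}")
      case True thus ?thesis using I'eq fp_empty by simp
    next
      case False
      hence X'e: "X' = {None}" using X'N by blast
      hence N: "None \<in> ?C" using X'(2) by simp
      have "I' = {None \<otimes>\<^bsub>?Z\<^esub> s | s. s \<in> ?C}" unfolding I'eq X'e by blast
      also have "\<dots> = {None}" using monoid.one_closed[OF MZ] by (auto intro!: exI[of _ "Some \<one>\<^bsub>S\<^esub>"])
      finally have "I' = {None}" .
      thus ?thesis using dirA_zero[OF M N] by simp
    qed
  next
    case False
    define I where "I = {x \<otimes>\<^bsub>S\<^esub> s | x s. x \<in> X \<and> s \<in> carrier S}"
    have IS: "I \<subseteq> carrier S" using XS monoid.m_closed[OF M] by (auto simp: I_def)
    have "fg_right_ideal S I" unfolding fg_right_ideal_def right_ideal_def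
    proof (intro conjI ballI exI[of _ X])
      show "I \<subseteq> carrier S" by (rule IS)
    next
      fix a s assume "a \<in> I" "s \<in> carrier S"
      then obtain x t where xt: "x \<in> X" "t \<in> carrier S" "a = x \<otimes>\<^bsub>S\<^esub> t" by (auto simp: I_def)
      have "a \<otimes>\<^bsub>S\<^esub> s = x \<otimes>\<^bsub>S\<^esub> (t \<otimes>\<^bsub>S\<^esub> s)"
        using xt XS \<open>s \<in> carrier S\<close> monoid.m_assoc[OF M, of x t s] by auto
      moreover have "t \<otimes>\<^bsub>S\<^esub> s \<in> carrier S" using xt \<open>s \<in> carrier S\<close> monoid.m_closed[OF M] by auto
      ultimately show "a \<otimes>\<^bsub>S\<^esub> s \<in> I" using xt(1) unfolding I_def by blast
    qed (use finX XS I_def in auto)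
    hence "fp_right_ideal S I" using W unfolding weakly_right_coherent_def by blast
    then obtain n f where fI: "\<forall>i<n. f i \<in> I" and Ieq: "I = {f i \<otimes>\<^bsub>S\<^esub> s | i s. i < n \<and> s \<in> carrier S}"
      and fg: "fg_right_congruence S n (act_kernel S n f)"
      unfolding fp_right_ideal_def by blast
    then obtain H where H: "finite H" "H \<subseteq> free_act S n \<times> free_act S n"
      "act_kernel S n f = generated_right_congruence S n H"
      unfolding fg_right_congruence_def by blast
    obtain x0 where x0: "x0 \<in> X" using False by blast
    have "x0 \<otimes>\<^bsub>S\<^esub> \<one>\<^bsub>S\<^esub> \<in> I" unfolding I_def using x0 monoid.one_closed[OF M] by blast
    have n: "0 < n"
    proof (rule ccontr)
      assume "\<not> 0 < n"
      hence "I = {}" unfolding Ieq by auto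
      thus False using \<open>x0 \<otimes>\<^bsub>S\<^esub> \<one>\<^bsub>S\<^esub> \<in> I\<close> by simp
    qed
    have "I' = Some ` I \<union> ({None} \<inter> ?C)"
    proof (intro Set.set_eqI iffI)
      fix y assume "y \<in> I'"
      then obtain x' s where y: "y = x' \<otimes>\<^bsub>?Z\<^esub> s" "x' \<in> X'" "s \<in> ?C" using I'eq by blast
      show "y \<in> Some ` I \<union> ({None} \<inter> ?C)"
      proof (cases "x' = None \<or> s = None")
        case True
        hence "None \<in> ?C" using y X'(2) by auto
        thus ?thesis using True y by auto
      next
        case False
        then obtain x t where xt: "x' = Some x" "s = Some t" by auto
        have "x \<in> X" using y xt by (simp add: X_def)
        moreover have "t \<in> carrier S" using y xt by simp
        ultimately have "x \<otimes>\<^bsub>S\<^esub> t \<in> I" unfolding I_def by blast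
        thus ?thesis using y xt by simp
      qed
    next
      fix y assume "y \<in> Some ` I \<union> ({None} \<inter> ?C)"
      then consider a where "y = Some a" "a \<in> I" | "y = None" "None \<in> ?C" by blast
      thus "y \<in> I'"
      proof cases
        case 1
        then obtain x t where "x \<in> X" "t \<in> carrier S" "a = x \<otimes>\<^bsub>S\<^esub> t" unfolding I_def by blast
        hence "y = Some x \<otimes>\<^bsub>?Z\<^esub> Some t" "Some x \<in> X'" "Some t \<in> ?C" using 1 by (auto simp: X_def)
        thus ?thesis unfolding I'eq by blast
      next
        case 2
        have "y = Some x0 \<otimes>\<^bsub>?Z\<^esub> None" "Some x0 \<in> X'" using 2 x0 by (auto simp: X_def)
        thus ?thesis unfolding I'eq using 2 by blast
      qed
    qed
    thus ?thesis using dirA_lift[OF M fI Ieq H n IS] by simp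
  qed
qed



lemma dirB_kernel:
  fixes S :: "'a monoid" and g :: "nat \<Rightarrow> 'a option"
  assumes M: "monoid S"
    and gC: "\<And>i. i < n \<Longrightarrow> g i \<in> carrier (zero_adjoin S)"
    and H'f: "finite H'" and H's: "H' \<subseteq> free_act (zero_adjoin S) n \<times> free_act (zero_adjoin S) n"
    and K': "act_kernel (zero_adjoin S) n g = generated_right_congruence (zero_adjoin S) n H'"
    and i0: "i0 < n" "g i0 = Some a0"
    and f_def: "f = (\<lambda>i. case g i of Some a \<Rightarrow> a | None \<Rightarrow> a0)"
  shows "fg_right_congruence S n (act_kernel S n f)"
proof -
  let ?Z = "zero_adjoin S"
  let ?C = "carrier ?Z"
  have MZ: "monoid ?Z" using Z_monoid[OF M] .
  define r where "r i = (if g i = None then i0 else i)" for i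
  have gr: "g (r i) = Some (f i)" for i
    using i0 by (cases "g i") (auto simp: f_def r_def)
  have rn: "r i < n" if "i < n" for i using that i0 by (simp add: r_def)
  have fS: "f i \<in> carrier S" if "i < n" for i
    using gC[OF rn[OF that]] gr[of i] by simp
  have H'K: "H' \<subseteq> act_kernel ?Z n g" using K' unfolding generated_right_congruence_def by blast
  let ?L = "\<lambda>((i::nat,a),(j::nat,b)). ((i, Some a), (j, Some b))"
  define H1 where "H1 = {((i,a),(j,b)). g i \<noteq> None \<and> g j \<noteq> None \<and> ((i, Some a), (j, Some b)) \<in> H'}"
  define H2 where "H2 = (\<lambda>i. ((i, \<one>\<^bsub>S\<^esub>), (i0, \<one>\<^bsub>S\<^esub>))) ` {i. i < n \<and> g i = None}"
  have injL: "inj ?L" unfolding inj_def by auto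
  have "H1 \<subseteq> ?L -` H'" unfolding H1_def by auto
  hence fH1: "finite H1" using finite_vimageI[OF H'f injL] finite_subset by blast
  have fH2: "finite H2" unfolding H2_def by simp
  have H1s: "H1 \<subseteq> free_act S n \<times> free_act S n"
  proof
    fix p assume p: "p \<in> H1"
    then obtain i a j b where pe: "p = ((i,a),(j,b))" "((i, Some a), (j, Some b)) \<in> H'"
      unfolding H1_def by blast
    have "(i, Some a) \<in> free_act ?Z n" "(j, Some b) \<in> free_act ?Z n" using pe(2) H's by auto
    thus "p \<in> free_act S n \<times> free_act S n" using pe(1) by (simp add: free_act_def)
  qed
  have H2s: "H2 \<subseteq> free_act S n \<times> free_act S n"
    unfolding H2_def using i0 monoid.one_closed[OF M] by (auto simp: free_act_def)
  have "act_kernel S n f = generated_right_congruence S n (H1 \<union> H2)"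
  proof (rule kernel_eq_gen)
    show "right_congruence S n (act_kernel S n f)" by (rule kernel_rc[OF M fS])
    show "H1 \<union> H2 \<subseteq> act_kernel S n f"
    proof
      fix p assume "p \<in> H1 \<union> H2"
      then consider (a) i a j b where "p = ((i,a),(j,b))" "g i \<noteq> None" "g j \<noteq> None"
          "((i, Some a), (j, Some b)) \<in> H'"
        | (b) i where "p = ((i, \<one>\<^bsub>S\<^esub>), (i0, \<one>\<^bsub>S\<^esub>))" "i < n" "g i = None"
        unfolding H1_def H2_def by blast
      thus "p \<in> act_kernel S n f"
      proof cases
        case a
        then obtain c d where cd: "g i = Some c" "g j = Some d" by blast
        have "((i, Some a), (j, Some b)) \<in> act_kernel ?Z n g" using a(4) H'K by blast
        hence "i < n" "j < n" "a \<in> carrier S" "b \<in> carrier S" "c \<otimes>\<^bsub>S\<^esub> a = d \<otimes>\<^bsub>S\<^esub> b"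
          using cd by (auto simp: act_kernel_def free_act_def)
        thus ?thesis using a(1) cd by (simp add: act_kernel_def free_act_def f_def)
      next
        case b thus ?thesis using i0 monoid.one_closed[OF M] by (simp add: act_kernel_def free_act_def f_def)
      qed
    qed
  next
    fix \<sigma> assume s: "right_congruence S n \<sigma>" "H1 \<union> H2 \<subseteq> \<sigma>"
    define Zc where "Zc = {p \<in> free_act ?Z n. g (fst p) \<otimes>\<^bsub>?Z\<^esub> snd p = None}"
    define P where "P = {((i, Some a), (j, Some b)) | i a j b. g i \<noteq> None \<and> g j \<noteq> None \<and> ((i,a),(j,b)) \<in> \<sigma>}"
    define \<rho> where "\<rho> = P \<union> Zc \<times> Zc"
    have Pnz: "x \<notin> Zc" "y \<notin> Zc" if "(x, y) \<in> P" for x y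
      using that unfolding P_def Zc_def by auto
    have rr: "right_congruence ?Z n \<rho>"
      unfolding right_congruence_def equiv_def refl_on_def sym_def trans_def
    proof (intro conjI allI impI ballI)
      show "\<rho> \<subseteq> free_act ?Z n \<times> free_act ?Z n"
      proof
        fix p assume "p \<in> \<rho>"
        then consider "p \<in> P" | "p \<in> Zc \<times> Zc" unfolding \<rho>_def by blast
        thus "p \<in> free_act ?Z n \<times> free_act ?Z n"
        proof cases
          case 1
          then obtain i a j b where pe: "p = ((i, Some a), (j, Some b))" "((i,a),(j,b)) \<in> \<sigma>"
            unfolding P_def by blast
          have "(i,a) \<in> free_act S n" "(j,b) \<in> free_act S n" using rc_sub[OF s(1) pe(2)] by auto
          thus ?thesis using pe(1) by (simp add: free_act_def)
        next
          case 2 thus ?thesis unfolding Zc_def by blast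
        qed
      qed
    next
      fix x assume x: "x \<in> free_act ?Z n"
      obtain i s where xe: "x = (i, s)" by (cases x)
      show "(x, x) \<in> \<rho>"
      proof (cases "g i \<otimes>\<^bsub>?Z\<^esub> s = None")
        case True thus ?thesis using x xe unfolding \<rho>_def Zc_def by auto
      next
        case False
        then obtain c a where ca: "g i = Some c" "s = Some a" by (cases "g i"; cases s) auto
        have "(i, a) \<in> free_act S n" using x xe ca by (simp add: free_act_def)
        hence "((i,a),(i,a)) \<in> \<sigma>" by (rule rc_refl[OF s(1)])
        thus ?thesis using xe ca unfolding \<rho>_def P_def by blast
      qed
    next
      fix x y assume "(x, y) \<in> \<rho>"
      thus "(y, x) \<in> \<rho>" unfolding \<rho>_def P_def using rc_sym[OF s(1)] by blast
    next
      fix x y z assume xy: "(x, y) \<in> \<rho>" and yz: "(y, z) \<in> \<rho>"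
      show "(x, z) \<in> \<rho>"
      proof (cases "(x, y) \<in> P")
        case True
        hence "y \<notin> Zc" by (rule Pnz)
        hence "(y, z) \<in> P" using yz unfolding \<rho>_def by blast
        thus ?thesis using True unfolding \<rho>_def P_def using rc_trans[OF s(1)] by blast
      next
        case False
        hence "x \<in> Zc" "y \<in> Zc" using xy unfolding \<rho>_def by auto
        hence "(y, z) \<notin> P" using Pnz by blast
        hence "z \<in> Zc" using yz unfolding \<rho>_def by blast
        thus ?thesis using \<open>x \<in> Zc\<close> unfolding \<rho>_def by blast
      qed
    next
      fix i s j t u assume st: "((i, s), j, t) \<in> \<rho>" and u: "u \<in> ?C"
      show "((i, s \<otimes>\<^bsub>?Z\<^esub> u), j, t \<otimes>\<^bsub>?Z\<^esub> u) \<in> \<rho>"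
      proof (cases "((i, s), j, t) \<in> P")
        case True
        then obtain a b where ab: "s = Some a" "t = Some b" "g i \<noteq> None" "g j \<noteq> None"
          "((i,a),(j,b)) \<in> \<sigma>" unfolding P_def by blast
        have ij: "i < n" "j < n" using rc_sub[OF s(1) ab(5)] by (auto simp: free_act_def)
        show ?thesis
        proof (cases u)
          case None
          thus ?thesis using u ij unfolding \<rho>_def Zc_def by (auto simp: free_act_def)
        next
          case (Some v)
          hence "v \<in> carrier S" using u by simp
          hence "((i, a \<otimes>\<^bsub>S\<^esub> v), (j, b \<otimes>\<^bsub>S\<^esub> v)) \<in> \<sigma>" using rc_comp[OF s(1) ab(5)] by blast
          thus ?thesis using ab Some unfolding \<rho>_def P_def by auto
        qed
      next
        case False
        hence z: "(i, s) \<in> Zc" "(j, t) \<in> Zc" using st unfolding \<rho>_def by auto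
        have zc: "(k, w \<otimes>\<^bsub>?Z\<^esub> u) \<in> Zc" if "(k, w) \<in> Zc" for k w
        proof -
          have k: "k < n" "w \<in> ?C" "g k \<otimes>\<^bsub>?Z\<^esub> w = None" using that by (auto simp: Zc_def free_act_def)
          have "g k \<otimes>\<^bsub>?Z\<^esub> (w \<otimes>\<^bsub>?Z\<^esub> u) = (g k \<otimes>\<^bsub>?Z\<^esub> w) \<otimes>\<^bsub>?Z\<^esub> u"
            using monoid.m_assoc[OF MZ gC[OF k(1)] k(2) u] by simp
          also have "\<dots> = None" using k(3) by simp
          finally show ?thesis using k monoid.m_closed[OF MZ k(2) u] by (simp add: Zc_def free_act_def)
        qed
        show ?thesis using zc[OF z(1)] zc[OF z(2)] unfolding \<rho>_def by blast
      qed
    qed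
    have "H' \<subseteq> \<rho>"
    proof
      fix p assume p: "p \<in> H'"
      then obtain i s j t where pe: "p = ((i,s),(j,t))" by (metis prod.exhaust)
      have k: "i < n" "j < n" "s \<in> ?C" "t \<in> ?C" "g i \<otimes>\<^bsub>?Z\<^esub> s = g j \<otimes>\<^bsub>?Z\<^esub> t"
        using p pe H'K by (auto simp: act_kernel_def free_act_def)
      show "p \<in> \<rho>"
      proof (cases "g i \<otimes>\<^bsub>?Z\<^esub> s = None")
        case True thus ?thesis using k pe unfolding \<rho>_def Zc_def by (auto simp: free_act_def)
      next
        case False
        then obtain c a where ca: "g i = Some c" "s = Some a" by (cases "g i"; cases s) auto
        from False k(5) obtain d b where db: "g j = Some d" "t = Some b" by (cases "g j"; cases t) auto
        have "((i,a),(j,b)) \<in> H1" using p pe ca db unfolding H1_def by auto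
        hence "((i,a),(j,b)) \<in> \<sigma>" using s(2) by blast
        thus ?thesis using pe ca db unfolding \<rho>_def P_def by blast
      qed
    qed
    hence K'r: "act_kernel ?Z n g \<subseteq> \<rho>" using K' gen_least[OF rr] by simp
    have toR: "((i,a),(r i,a)) \<in> \<sigma>" if "i < n" "a \<in> carrier S" for i a
    proof (cases "g i = None")
      case True
      hence "((i, \<one>\<^bsub>S\<^esub>), (i0, \<one>\<^bsub>S\<^esub>)) \<in> \<sigma>" using s(2) that unfolding H2_def by blast
      hence "((i, \<one>\<^bsub>S\<^esub> \<otimes>\<^bsub>S\<^esub> a), (i0, \<one>\<^bsub>S\<^esub> \<otimes>\<^bsub>S\<^esub> a)) \<in> \<sigma>" using rc_comp[OF s(1)] that by blast
      thus ?thesis using True monoid.l_one[OF M that(2)] by (simp add: r_def)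
    next
      case False
      have "r i = i" using False unfolding r_def by auto
      thus ?thesis using rc_refl[OF s(1)] that by (simp add: free_act_def)
    qed
    show "act_kernel S n f \<subseteq> \<sigma>"
    proof
      fix p assume p: "p \<in> act_kernel S n f"
      then obtain i a j b where pe: "p = ((i,a),(j,b))" "i < n" "j < n" "a \<in> carrier S" "b \<in> carrier S"
        "f i \<otimes>\<^bsub>S\<^esub> a = f j \<otimes>\<^bsub>S\<^esub> b" by (auto simp: act_kernel_def free_act_def)
      have "((r i, Some a), (r j, Some b)) \<in> act_kernel ?Z n g"
        using pe rn gr by (simp add: act_kernel_def free_act_def)
      hence inr: "((r i, Some a), (r j, Some b)) \<in> \<rho>" using K'r by blast
      have "(r i, Some a) \<notin> Zc" using gr by (simp add: Zc_def)
      hence "((r i, Some a), (r j, Some b)) \<in> P" using inr unfolding \<rho>_def by blast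
      hence "((r i, a), (r j, b)) \<in> \<sigma>" unfolding P_def by blast
      moreover have "((i,a),(r i,a)) \<in> \<sigma>" "((j,b),(r j,b)) \<in> \<sigma>" using toR pe by auto
      ultimately show "p \<in> \<sigma>" using pe(1) rc_sym[OF s(1)] rc_trans[OF s(1)] by meson
    qed
  qed
  moreover have "finite (H1 \<union> H2)" using fH1 fH2 by simp
  moreover have "H1 \<union> H2 \<subseteq> free_act S n \<times> free_act S n" using H1s H2s by simp
  ultimately show ?thesis unfolding fg_right_congruence_def by blast
qed


lemma dirB:
  assumes M: "monoid S" and W: "weakly_right_coherent (zero_adjoin S)"
  shows "weakly_right_coherent S"
  unfolding weakly_right_coherent_def
proof (intro allI impI)
  let ?Z = "zero_adjoin S"
  let ?C = "carrier ?Z"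
  have MZ: "monoid ?Z" using Z_monoid[OF M] .
  fix I assume "fg_right_ideal S I"
  then obtain X where X: "finite X" "X \<subseteq> carrier S"
    and Ieq: "I = {x \<otimes>\<^bsub>S\<^esub> s | x s. x \<in> X \<and> s \<in> carrier S}"
    unfolding fg_right_ideal_def by blast
  show "fp_right_ideal S I"
  proof (cases "X = {}")
    case True hence "I = {}" unfolding Ieq by simp
    thus ?thesis using fp_empty by simp
  next
    case False
    obtain x0 where x0: "x0 \<in> X" using False by blast
    define I' where "I' = {x \<otimes>\<^bsub>?Z\<^esub> s | x s. x \<in> Some ` X \<and> s \<in> ?C}"
    have I'C: "I' \<subseteq> ?C"
    proof
      fix y assume "y \<in> I'"
      then obtain x s where "y = x \<otimes>\<^bsub>?Z\<^esub> s" "x \<in> Some ` X" "s \<in> ?C" unfolding I'_def by blast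
      thus "y \<in> ?C" using X(2) monoid.m_closed[OF MZ] by auto
    qed
    have I'cl: "a \<otimes>\<^bsub>?Z\<^esub> s \<in> I'" if as: "a \<in> I'" "s \<in> ?C" for a s
    proof -
      obtain x t where xt: "a = x \<otimes>\<^bsub>?Z\<^esub> t" "x \<in> Some ` X" "t \<in> ?C" using as(1) unfolding I'_def by blast
      have xC: "x \<in> ?C" using xt(2) X(2) by auto
      have "a \<otimes>\<^bsub>?Z\<^esub> s = x \<otimes>\<^bsub>?Z\<^esub> (t \<otimes>\<^bsub>?Z\<^esub> s)"
        using xt(1) monoid.m_assoc[OF MZ xC xt(3) as(2)] by simp
      moreover have "t \<otimes>\<^bsub>?Z\<^esub> s \<in> ?C" using monoid.m_closed[OF MZ xt(3) as(2)] .
      ultimately show ?thesis using xt(2) unfolding I'_def by blast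
    qed
    have "fg_right_ideal ?Z I'" unfolding fg_right_ideal_def right_ideal_def
    proof (intro conjI ballI exI[of _ "Some ` X"])
      show "I' \<subseteq> ?C" by (rule I'C)
    next
      fix a s assume "a \<in> I'" "s \<in> ?C" thus "a \<otimes>\<^bsub>?Z\<^esub> s \<in> I'" by (rule I'cl)
    next
      show "finite (Some ` X)" using X(1) by simp
    next
      show "Some ` X \<subseteq> ?C" using X(2) by auto
    next
      show "I' = {x \<otimes>\<^bsub>?Z\<^esub> s | x s. x \<in> Some ` X \<and> s \<in> ?C}" by (rule I'_def)
    qed
    hence "fp_right_ideal ?Z I'" using W unfolding weakly_right_coherent_def by blast
    then obtain n g where gI: "\<forall>i<n. g i \<in> I'" and I'eq: "I' = {g i \<otimes>\<^bsub>?Z\<^esub> s | i s. i < n \<and> s \<in> ?C}"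
      and fg: "fg_right_congruence ?Z n (act_kernel ?Z n g)"
      unfolding fp_right_ideal_def by blast
    then obtain H' where H': "finite H'" "H' \<subseteq> free_act ?Z n \<times> free_act ?Z n"
      "act_kernel ?Z n g = generated_right_congruence ?Z n H'"
      unfolding fg_right_congruence_def by blast
    have gC: "g i \<in> ?C" if "i < n" for i using gI I'C that by blast
    have memS: "Some c \<in> I' \<longleftrightarrow> c \<in> I" for c
    proof
      assume "Some c \<in> I'"
      then obtain x s where xs: "Some c = x \<otimes>\<^bsub>?Z\<^esub> s" "x \<in> Some ` X" "s \<in> ?C" unfolding I'_def by blast
      obtain a b where ab: "x = Some a" "s = Some b" "c = a \<otimes>\<^bsub>S\<^esub> b" using Z_prod_Some[OF xs(1)] by blast
      have aX: "a \<in> X" using xs(2) ab(1) by auto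
      have "b \<in> carrier S" using xs(3) ab(2) by simp
      thus "c \<in> I" unfolding Ieq using ab(3) aX by blast
    next
      assume "c \<in> I"
      then obtain a b where ab: "a \<in> X" "b \<in> carrier S" "c = a \<otimes>\<^bsub>S\<^esub> b" unfolding Ieq by blast
      hence "Some c = Some a \<otimes>\<^bsub>?Z\<^esub> Some b" "Some a \<in> Some ` X" "Some b \<in> ?C" by simp_all
      thus "Some c \<in> I'" unfolding I'_def by blast
    qed
    have "x0 \<otimes>\<^bsub>S\<^esub> \<one>\<^bsub>S\<^esub> \<in> I" unfolding Ieq using x0 monoid.one_closed[OF M] by blast
    moreover have "x0 \<otimes>\<^bsub>S\<^esub> \<one>\<^bsub>S\<^esub> = x0" using x0 X(2) monoid.r_one[OF M, of x0] by blast
    ultimately have "Some x0 \<in> I'" using memS by simp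
    then obtain i0 s0 where i0: "i0 < n" "s0 \<in> ?C" "Some x0 = g i0 \<otimes>\<^bsub>?Z\<^esub> s0" unfolding I'eq by blast
    obtain a0 where ga0: "g i0 = Some a0" using Z_prod_Some[OF i0(3)] by blast
    define f where "f = (\<lambda>i. case g i of Some a \<Rightarrow> a | None \<Rightarrow> a0)"
    define r where "r i = (if g i = None then i0 else i)" for i
    have gr: "g (r i) = Some (f i)" for i
      using ga0 by (cases "g i") (auto simp: f_def r_def)
    have rn: "r i < n" if "i < n" for i using that i0 by (simp add: r_def)
    have fI: "\<forall>i<n. f i \<in> I"
    proof (intro allI impI)
      fix i assume "i < n"
      hence "g (r i) \<in> I'" using gI rn by blast
      thus "f i \<in> I" using gr memS by simp
    qed
    have Ieq2: "I = {f i \<otimes>\<^bsub>S\<^esub> s | i s. i < n \<and> s \<in> carrier S}"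
    proof (intro Set.set_eqI iffI)
      fix c assume "c \<in> I"
      hence "Some c \<in> I'" using memS by simp
      then obtain i u where iu: "i < n" "u \<in> ?C" "Some c = g i \<otimes>\<^bsub>?Z\<^esub> u" unfolding I'eq by blast
      obtain a b where ab: "g i = Some a" "u = Some b" "c = a \<otimes>\<^bsub>S\<^esub> b" using Z_prod_Some[OF iu(3)] by blast
      have "f i = a" using ab by (simp add: f_def)
      moreover have "b \<in> carrier S" using iu ab by simp
      ultimately show "c \<in> {f i \<otimes>\<^bsub>S\<^esub> s | i s. i < n \<and> s \<in> carrier S}" using iu ab by blast
    next
      fix c assume "c \<in> {f i \<otimes>\<^bsub>S\<^esub> s | i s. i < n \<and> s \<in> carrier S}"
      then obtain i s where isx: "i < n" "s \<in> carrier S" "c = f i \<otimes>\<^bsub>S\<^esub> s" by blast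
      have "g (r i) \<in> I'" using gI rn isx(1) by blast
      hence "g (r i) \<otimes>\<^bsub>?Z\<^esub> Some s \<in> I'" using I'cl isx(2) by simp
      hence "Some c \<in> I'" using gr isx(3) by simp
      thus "c \<in> I" using memS by simp
    qed
    have "fg_right_congruence S n (act_kernel S n f)"
      by (rule dirB_kernel[OF M gC H'(1) H'(2) H'(3) i0(1) ga0 f_def])
    thus ?thesis unfolding fp_right_ideal_def by (intro exI[of _ n] exI[of _ f] conjI fI Ieq2)
  qed
qed

theorem mainTheorem5:
  fixes S :: "'a monoid"
  assumes "monoid S"
  shows "weakly_right_coherent S \<longleftrightarrow> weakly_right_coherent (zero_adjoin S)"
  using dirA[OF assms] dirB[OF assms] by blast


end
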